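(* Let $(\mathbf k,\log)$ be an ordered field with surjective logarithm, $(\mathbf k((G)),l)$ a series field with prelogarithmic section, $\psi$ a morphism from $(\mathbf k((G)),l)$ to itself, and $H\ne\{1\}$ a subgroup of $G$ satisfying the growth axiom. Then for every $m\ge0$, $G^0_m$ satisfies the growth axiom, and for every $n\ge0$, $G^{n+1}_m$ is the anti-lexicographic product of $G^n_m$ and $\mathrm{Exp}\,\mathbf k(((G^n_m)^{>G^{n-1}_m}))$. Moreover $\mathrm{Exp}\,\mathbf k(((G^n_m)^{>1}))\subseteq G^{n+1}_m$.
   Context: Let $\mathbf k$ be an ordered field and $(G,\cdot,<)$ a totally ordered abelian group (written multiplicatively). $\mathbf k((G))$ denotes the field of generalized power series $\alpha=\sum_{g\in G}\alpha(g)\,g$ ($\alpha(g)\in\mathbf k$) with anti-well-ordered support, usual operations, canonical valuation $v(\alpha)=\max\operatorname{supp}\alpha$ and ordering $\alpha>0$ iff $\alpha(v(\alpha))>0$; $\mathbf k$, $G$ are identified with subsets of $\mathbf k((G))$. For $S\subseteq G$, $\mathbf k((S))=\{\alpha:\operatorname{supp}\alpha\subseteq S\}$. For a subgroup $H$ and $A\subseteq G$, $H^{>A}=\{h\in H:h>a\ \forall a\in A\}$, $H^{>1}=\{h\in H:h>1\}$. Every $\alpha>0$ is uniquely $\alpha=g\,a(1+\varepsilon)$ with $g=v(\alpha)$, $a\in\mathbf k^{>0}$, $\varepsilon\in\mathbf k((G^{<1}))$. A prelogarithmic section is an order-preserving group embedding $l:(G,\cdot)\to(\mathbf k((G^{>1})),+)$;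 the prelogarithm of $l$ is $L(g\,a(1+\varepsilon))=l(g)+\log a+\sum_{i\ge1}(-1)^{i-1}\varepsilon^i/i$. Exponential extension: $G^\#$ is the ordered abelian group of formal symbols $e(\alpha)$, $\alpha\in\mathbf k((G^{>1}))$, with $e(\alpha)e(\beta)=e(\alpha+\beta)$, $e(\alpha)<e(\beta)\iff\alpha<\beta$, and $e(l(g))$ identified with $g\in G$; $l^\#(e(\alpha))=\alpha$ is a prelogarithmic section of $\mathbf k((G^\#))$ extending $l$. Iterating: $G^{\#n}$, $l^{\#n}$, $L^{\#n}$. The EL-series field is $\mathbf k((G))^{EL}=\bigcup_n\mathbf k((G^{\#n}))$ with $\mathrm{Log}=\bigcup_nL^{\#n}$ and $\mathrm{Exp}=\mathrm{Log}^{-1}$. An order-preserving group embedding $\psi:G\to G$, extended to $\mathbf k((G))$ by $\psi(\sum a_gg)=\sum a_g\psi(g)$, is a morphism of $(\mathbf k((G)),l)$ to itself if $\psi\circ l=l\circ\psi$ on $G$; $\psi^{(m)}$ is its $m$-fold composite. A subgroup $H\ne\{1\}$ of $G$ satisfies the growth axiom if $\mathrm{Log}(h)<|f|$ for all $h\in H$ and all nonzero $f\in\mathbf k((H^{>1}))$. "Anti-lexicographic product" of subgroups $A,B$: the group is $A\cdot B$, the product is direct and $A$ is convex in it. LE construction: $G^{-1}_m=\{1\}$, $G^0_m=\psi^{(m)}(H)$, $G^{n+1}_m=G^n_m\cdot\mathrm{Exp}\,\mathbf k(((G^n_m)^{>G^{n-1}_m}))\subseteq G^{\#(n+1)}$.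 *)

theory Defs
  imports Main
begin

text \<open>The value group is written additively: the ambient type
 'u is a linearly ordered abelian group (written with +, 0, <), so the
 paper's multiplicative 1, g*h, g^{-1}, G^{>1} become 0, g+h, -g, positive part.
 A generalized power series over 'u with coefficients in 'k is a function
 'u => 'k; k((S)) is the set of such functions with anti-well-ordered
 support contained in S.\<close>

definition supp :: "('u \<Rightarrow> 'k::zero) \<Rightarrow> 'u set" where
  "supp a = {g. a g \<noteq> 0}"

definition anti_wo :: "'u::linorder set \<Rightarrow> bool" where
  "anti_wo A \<longleftrightarrow> (\<forall>B. B \<subseteq> A \<longrightarrow> B \<noteq> {} \<longrightarrow> (\<exists>b\<in>B. \<forall>c\<in>B. c \<le> b))"

definition hahn :: "'u::linorder set \<Rightarrow> ('u \<Rightarrow> 'k::zero) set" where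
  "hahn S = {a. supp a \<subseteq> S \<and> anti_wo (supp a)}"

definition hzero :: "'u \<Rightarrow> 'k::zero" where
  "hzero = (\<lambda>_. 0)"

definition hadd :: "('u \<Rightarrow> 'k::ab_group_add) \<Rightarrow> ('u \<Rightarrow> 'k) \<Rightarrow> ('u \<Rightarrow> 'k)" where
  "hadd a b = (\<lambda>g. a g + b g)"

definition hneg :: "('u \<Rightarrow> 'k::ab_group_add) \<Rightarrow> ('u \<Rightarrow> 'k)" where
  "hneg a = (\<lambda>g. - a g)"

definition hval :: "('u::linorder \<Rightarrow> 'k::zero) \<Rightarrow> 'u" where
  "hval a = (GREATEST g. a g \<noteq> 0)"

definition hpos :: "('u::linorder \<Rightarrow> 'k::linordered_field) \<Rightarrow> bool" where
  "hpos a \<longleftrightarrow> a \<noteq> hzero \<and> 0 < a (hval a)"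

definition hless :: "('u::linorder \<Rightarrow> 'k::linordered_field) \<Rightarrow> ('u \<Rightarrow> 'k) \<Rightarrow> bool" where
  "hless a b \<longleftrightarrow> hpos (hadd b (hneg a))"

definition habs :: "('u::linorder \<Rightarrow> 'k::linordered_field) \<Rightarrow> ('u \<Rightarrow> 'k)" where
  "habs a = (if hpos a then a else hneg a)"

definition surj_log :: "('k::linordered_field \<Rightarrow> 'k) \<Rightarrow> bool" where
  "surj_log lg \<longleftrightarrow>
     (\<forall>a b. 0 < a \<longrightarrow> 0 < b \<longrightarrow> lg (a * b) = lg a + lg b)
   \<and> (\<forall>a b. 0 < a \<longrightarrow> a < b \<longrightarrow> lg a < lg b)
   \<and> (\<forall>y. \<exists>x. 0 < x \<and> lg x = y)"

definition addsubgroup :: "'u::ab_group_add set \<Rightarrow> bool" where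
  "addsubgroup A \<longleftrightarrow> 0 \<in> A \<and> (\<forall>x\<in>A. \<forall>y\<in>A. x + y \<in> A) \<and> (\<forall>x\<in>A. - x \<in> A)"

definition above :: "'u::linorder set \<Rightarrow> 'u set \<Rightarrow> 'u set" where
  "above H A = {h \<in> H. \<forall>a\<in>A. a < h}"

definition pos :: "'u::linordered_ab_group_add set \<Rightarrow> 'u set" where
  "pos H = above H {0}"

definition gprod :: "'u::ab_group_add set \<Rightarrow> 'u set \<Rightarrow> 'u set" where
  "gprod A B = {a + b |a b. a \<in> A \<and> b \<in> B}"

definition prelog_section ::
  "'u::linordered_ab_group_add set \<Rightarrow> ('u \<Rightarrow> 'u \<Rightarrow> 'k::linordered_field) \<Rightarrow> bool" where
  "prelog_section G l \<longleftrightarrow>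
     (\<forall>g\<in>G. l g \<in> hahn (pos G))
   \<and> (\<forall>g\<in>G. \<forall>h\<in>G. l (g + h) = hadd (l g) (l h))
   \<and> (\<forall>g\<in>G. \<forall>h\<in>G. g < h \<longrightarrow> hless (l g) (l h))"

text \<open>A realization of the iterated exponential extensions inside the ambient
 group 'u: Gam n is G^{#n} (with G^{#n} \<subseteq> G^{#(n+1)} via the identification
 e(l^{#n}(g)) = g), and lw is the union of the l^{#n}, i.e. lw restricted to
 G^{#(n+1)} is l^{#(n+1)} = e^{-1}, an order-preserving group isomorphism onto
 k((G^{#n, >1})).\<close>
definition EL_tower ::
  "'u::linordered_ab_group_add set \<Rightarrow> ('u \<Rightarrow> 'u \<Rightarrow> 'k::linordered_field)
    \<Rightarrow> (nat \<Rightarrow> 'u set) \<Rightarrow> ('u \<Rightarrow> 'u \<Rightarrow> 'k) \<Rightarrow> bool" where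
  "EL_tower G l Gam lw \<longleftrightarrow>
     Gam 0 = G
   \<and> (\<forall>n. Gam n \<subseteq> Gam (Suc n))
   \<and> (\<forall>n. addsubgroup (Gam n))
   \<and> (\<forall>g\<in>G. lw g = l g)
   \<and> (\<forall>n. bij_betw lw (Gam (Suc n)) (hahn (pos (Gam n))))
   \<and> (\<forall>n. \<forall>x\<in>Gam (Suc n). \<forall>y\<in>Gam (Suc n). lw (x + y) = hadd (lw x) (lw y))
   \<and> (\<forall>n. \<forall>x\<in>Gam (Suc n). \<forall>y\<in>Gam (Suc n). x < y \<longrightarrow> hless (lw x) (lw y))"

text \<open>extension of psi to series: psi(sum a_g g) = sum a_g psi(g)\<close>
definition hmap :: "('u \<Rightarrow> 'u) \<Rightarrow> 'u set \<Rightarrow> ('u \<Rightarrow> 'k::zero) \<Rightarrow> ('u \<Rightarrow> 'k)" where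
  "hmap psi G a = (\<lambda>y. if y \<in> psi ` G then a (inv_into G psi y) else 0)"

definition morphism ::
  "'u::linordered_ab_group_add set \<Rightarrow> ('u \<Rightarrow> 'u \<Rightarrow> 'k::linordered_field) \<Rightarrow> ('u \<Rightarrow> 'u) \<Rightarrow> bool" where
  "morphism G l psi \<longleftrightarrow>
     psi ` G \<subseteq> G
   \<and> (\<forall>g\<in>G. \<forall>h\<in>G. psi (g + h) = psi g + psi h)
   \<and> (\<forall>g\<in>G. \<forall>h\<in>G. g < h \<longrightarrow> psi g < psi h)
   \<and> (\<forall>g\<in>G. l (psi g) = hmap psi G (l g))"

text \<open>Growth axiom for a subgroup H \<noteq> {1} of G. For h \<in> H \<subseteq> G (a monomial with
 coefficient 1), Log(h) = l(h) = lw h.\<close>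
definition growth_axiom ::
  "('u::linordered_ab_group_add \<Rightarrow> 'u \<Rightarrow> 'k::linordered_field) \<Rightarrow> 'u set \<Rightarrow> 'u set \<Rightarrow> bool" where
  "growth_axiom lw G H \<longleftrightarrow>
     H \<subseteq> G \<and> addsubgroup H \<and> H \<noteq> {0}
   \<and> (\<forall>h\<in>H. \<forall>f\<in>hahn (pos H). f \<noteq> hzero \<longrightarrow> hless (lw h) (habs f))"

text \<open>Exp k((S)) for S a set of positive elements of the EL value group:
 the elements x of the union of the G^{#n} with Log(x) = lw x \<in> k((S)).\<close>
definition Exp_set ::
  "(nat \<Rightarrow> 'u::linorder set) \<Rightarrow> ('u \<Rightarrow> 'u \<Rightarrow> 'k::zero) \<Rightarrow> 'u set \<Rightarrow> 'u set" where
  "Exp_set Gam lw S = {x \<in> (\<Union>n. Gam n). lw x \<in> hahn S}"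

definition antilex_prod :: "'u::linordered_ab_group_add set \<Rightarrow> 'u set \<Rightarrow> 'u set \<Rightarrow> bool" where
  "antilex_prod A B C \<longleftrightarrow>
     addsubgroup A \<and> addsubgroup B \<and> C = gprod A B \<and> A \<inter> B = {0}
   \<and> (\<forall>x\<in>A. \<forall>y\<in>A. \<forall>z\<in>C. x \<le> z \<and> z \<le> y \<longrightarrow> z \<in> A)"

text \<open>LE construction, shifted by one: LEg ... m (Suc n) is G^n_m, and
 LEg ... m 0 is G^{-1}_m = {1}.\<close>
fun LEg :: "(nat \<Rightarrow> 'u::linordered_ab_group_add set) \<Rightarrow> ('u \<Rightarrow> 'u \<Rightarrow> 'k::zero)
    \<Rightarrow> ('u \<Rightarrow> 'u) \<Rightarrow> 'u set \<Rightarrow> nat \<Rightarrow> nat \<Rightarrow> 'u set" where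
  "LEg Gam lw psi H m 0 = {0}"
| "LEg Gam lw psi H m (Suc 0) = (psi ^^ m) ` H"
| "LEg Gam lw psi H m (Suc (Suc n)) =
     gprod (LEg Gam lw psi H m (Suc n))
           (Exp_set Gam lw (above (LEg Gam lw psi H m (Suc n)) (LEg Gam lw psi H m n)))"

end

theory Submission
  imports Defs
begin


lemma anti_wo_subset: "anti_wo B \<Longrightarrow> A \<subseteq> B \<Longrightarrow> anti_wo A"
  unfolding anti_wo_def by blast

lemma anti_wo_Un:
  fixes A B :: "'u::linorder set"
  assumes "anti_wo A" "anti_wo B" shows "anti_wo (A \<union> B)"
  unfolding anti_wo_def
proof (intro allI impI)
  fix C assume C: "C \<subseteq> A \<union> B" "C \<noteq> {}"
  show "\<exists>b\<in>C. \<forall>c\<in>C. c \<le> b"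
  proof (cases "C \<inter> A = {}")
    case True
    then have "C \<subseteq> B" using C by blast
    then show ?thesis using assms(2) C unfolding anti_wo_def by blast
  next
    case False
    then obtain a where a: "a \<in> C \<inter> A" "\<forall>c\<in>C \<inter> A. c \<le> a"
      using assms(1)[unfolded anti_wo_def, rule_format, of "C \<inter> A"] by blast
    show ?thesis
    proof (cases "C \<inter> B = {}")
      case True then have "C \<subseteq> A" using C by blast
      then show ?thesis using a by blast
    next
      case False
      then obtain b where b: "b \<in> C \<inter> B" "\<forall>c\<in>C \<inter> B. c \<le> b"
        using assms(2)[unfolded anti_wo_def, rule_format, of "C \<inter> B"] by blast
      have "max a b \<in> C" using a b by (simp add: max_def)
      moreover have "\<forall>c\<in>C. c \<le> max a b" using a b C(1) by (auto simp: le_max_iff_disj)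
      ultimately show ?thesis by blast
    qed
  qed
qed

lemma supp_hadd: "supp (hadd a b) \<subseteq> supp a \<union> supp b"
  by (auto simp: supp_def hadd_def)

lemma supp_hneg: "supp (hneg a) = supp a"
  by (auto simp: supp_def hneg_def)

lemma hahn_hadd: "a \<in> hahn S \<Longrightarrow> b \<in> hahn S \<Longrightarrow> hadd a b \<in> hahn S"
  unfolding hahn_def using supp_hadd[of a b] anti_wo_Un anti_wo_subset by blast

lemma hahn_hneg: "a \<in> hahn S \<Longrightarrow> hneg a \<in> hahn S"
  unfolding hahn_def by (simp add: supp_hneg)

lemma hahn_zero: "hzero \<in> hahn S"
  unfolding hahn_def anti_wo_def supp_def hzero_def by simp

lemma hahn_mono: "S \<subseteq> T \<Longrightarrow> hahn S \<subseteq> hahn T"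
  unfolding hahn_def by blast

lemma hahn_single: "s \<in> S \<Longrightarrow> (\<lambda>y. if y = s then c else 0) \<in> hahn S"
  unfolding hahn_def anti_wo_def supp_def by (auto split: if_splits)

lemma hval_eq: "c v \<noteq> 0 \<Longrightarrow> (\<forall>w. v < w \<longrightarrow> c w = 0) \<Longrightarrow> hval c = (v::'u::linorder)"
  unfolding hval_def by (rule Greatest_equality) (auto simp: not_le[symmetric])

lemma hpos_at:
  fixes c :: "'u::linorder \<Rightarrow> 'k::linordered_field"
  assumes "c v \<noteq> 0" "\<forall>w. v < w \<longrightarrow> c w = 0" shows "hpos c \<longleftrightarrow> 0 < c v"
proof -
  have "hval c = v" using hval_eq assms by blast
  moreover have "c \<noteq> hzero" using assms(1) by (auto simp: hzero_def)
  ultimately show ?thesis unfolding hpos_def by simp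
qed

lemma hval_max:
  fixes a :: "'u::linorder \<Rightarrow> 'k::zero"
  assumes "anti_wo (supp a)" "a \<noteq> hzero"
  shows "hval a \<in> supp a" "\<forall>w\<in>supp a. w \<le> hval a"
proof -
  have "supp a \<noteq> {}" using assms(2) by (auto simp: supp_def hzero_def)
  then obtain b where b: "b \<in> supp a" "\<forall>c\<in>supp a. c \<le> b"
    using assms(1) unfolding anti_wo_def by blast
  have "hval a = b"
    using b by (intro hval_eq) (auto simp: supp_def not_le[symmetric])
  then show "hval a \<in> supp a" "\<forall>w\<in>supp a. w \<le> hval a" using b by auto
qed

lemma hval_hneg: "hval (hneg a) = hval (a :: 'u::linorder \<Rightarrow> 'k::ab_group_add)"
  unfolding hval_def hneg_def by simp

lemma hpos_not_both: "hpos d \<Longrightarrow> \<not> hpos (hneg d)"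
  unfolding hpos_def hval_hneg by (auto simp: hneg_def)

lemma hless_asym: "hless a b \<Longrightarrow> \<not> hless b a"
proof -
  have "hadd a (hneg b) = hneg (hadd b (hneg a))" by (rule ext) (simp add: hadd_def hneg_def)
  then show "hless a b \<Longrightarrow> \<not> hless b a" unfolding hless_def using hpos_not_both by metis
qed

lemma hless_irrefl: "\<not> hless a a"
proof -
  have "hadd a (hneg a) = hzero" by (rule ext) (simp add: hadd_def hneg_def hzero_def)
  then show ?thesis unfolding hless_def hpos_def by simp
qed

lemma trich:
  fixes a :: "'u::linorder \<Rightarrow> 'k::linordered_field"
  assumes "anti_wo (supp a)" "a \<noteq> hzero" shows "hpos a \<or> hpos (hneg a)"
proof -
  have "a (hval a) \<noteq> 0" using hval_max[OF assms] by (simp add: supp_def)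
  moreover have "hneg a \<noteq> hzero" using assms(2) by (auto simp: hneg_def hzero_def fun_eq_iff)
  ultimately show ?thesis using assms(2) unfolding hpos_def hval_hneg by (auto simp: hneg_def)
qed

lemma gprod_group:
  fixes A B :: "'a::ab_group_add set"
  assumes "addsubgroup A" "addsubgroup B" shows "addsubgroup (gprod A B)"
proof -
  have "0 \<in> gprod A B" using assms unfolding addsubgroup_def gprod_def by force
  moreover
  { fix x y assume "x \<in> gprod A B" "y \<in> gprod A B"
    then obtain a b a' b' where ab: "x = a+b" "y = a'+b'" "a\<in>A" "b\<in>B" "a'\<in>A" "b'\<in>B"
      unfolding gprod_def by blast
    then have "x + y = (a+a') + (b+b')" by (simp add: algebra_simps)
    moreover have "a+a' \<in> A" "b+b' \<in> B" using assms ab unfolding addsubgroup_def by blast+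
    ultimately have "x+y \<in> gprod A B" unfolding gprod_def by blast }
  moreover
  { fix x assume "x \<in> gprod A B"
    then obtain a b where ab: "x = a+b" "a\<in>A" "b\<in>B" unfolding gprod_def by blast
    then have "-x = (-a) + (-b)" by (simp add: algebra_simps)
    moreover have "-a \<in> A" "-b \<in> B" using assms ab unfolding addsubgroup_def by blast+
    ultimately have "-x \<in> gprod A B" unfolding gprod_def by blast }
  ultimately show ?thesis unfolding addsubgroup_def by blast
qed



locale P9 =
  fixes G :: "'u::linordered_ab_group_add set"
    and l :: "'u \<Rightarrow> 'u \<Rightarrow> 'k::linordered_field"
    and Gam :: "nat \<Rightarrow> 'u set"
    and lw :: "'u \<Rightarrow> 'u \<Rightarrow> 'k"
    and psi :: "'u \<Rightarrow> 'u"
    and H :: "'u set"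
  assumes tow: "EL_tower G l Gam lw"
    and mor: "morphism G l psi"
    and gr: "growth_axiom lw G H"
begin

definition "U = (\<Union>n. Gam n)"

lemma T: "Gam 0 = G" "\<And>n. Gam n \<subseteq> Gam (Suc n)" "\<And>n. addsubgroup (Gam n)"
  "\<And>g. g \<in> G \<Longrightarrow> lw g = l g" "\<And>n. bij_betw lw (Gam (Suc n)) (hahn (pos (Gam n)))"
  "\<And>n x y. x \<in> Gam (Suc n) \<Longrightarrow> y \<in> Gam (Suc n) \<Longrightarrow> lw (x+y) = hadd (lw x) (lw y)"
  "\<And>n x y. x \<in> Gam (Suc n) \<Longrightarrow> y \<in> Gam (Suc n) \<Longrightarrow> x < y \<Longrightarrow> hless (lw x) (lw y)"
  using tow unfolding EL_tower_def by auto

lemma Gam_mono: "i \<le> j \<Longrightarrow> Gam i \<subseteq> Gam j"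
  using lift_Suc_mono_le[of Gam] T(2) by blast

lemma common: assumes "x \<in> U" "y \<in> U" shows "\<exists>n. x \<in> Gam (Suc n) \<and> y \<in> Gam (Suc n)"
proof -
  obtain i j where "x \<in> Gam i" "y \<in> Gam j" using assms unfolding U_def by auto
  moreover have "Gam i \<subseteq> Gam (Suc (max i j))" "Gam j \<subseteq> Gam (Suc (max i j))"
    by (auto intro!: Gam_mono)
  ultimately show ?thesis by blast
qed

lemma lw_add: "x \<in> U \<Longrightarrow> y \<in> U \<Longrightarrow> lw (x+y) = hadd (lw x) (lw y)"
  using common T(6) by blast

lemma lw_mono: "x \<in> U \<Longrightarrow> y \<in> U \<Longrightarrow> x < y \<Longrightarrow> hless (lw x) (lw y)"
  using common T(7) by blast

lemma lw_less_iff: "x \<in> U \<Longrightarrow> y \<in> U \<Longrightarrow> hless (lw x) (lw y) \<longleftrightarrow> x < y"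
  by (metis hless_asym hless_irrefl lw_mono not_less_iff_gr_or_eq)

lemma lw_inj: "x \<in> U \<Longrightarrow> y \<in> U \<Longrightarrow> lw x = lw y \<Longrightarrow> x = y"
  by (metis hless_irrefl lw_mono not_less_iff_gr_or_eq)

lemma Gam_U: "Gam n \<subseteq> U" unfolding U_def by blast

lemma U_group: "addsubgroup U"
  unfolding addsubgroup_def
proof (intro conjI ballI)
  show "0 \<in> U" using T(3)[of 0] Gam_U unfolding addsubgroup_def by blast
next
  fix x y assume "x \<in> U" "y \<in> U"
  then obtain n where "x \<in> Gam (Suc n)" "y \<in> Gam (Suc n)" using common by blast
  then show "x + y \<in> U" using T(3)[of "Suc n"] Gam_U unfolding addsubgroup_def by blast
next
  fix x assume "x \<in> U" then show "-x \<in> U" using T(3) unfolding U_def addsubgroup_def by blast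
qed

lemma U0: "0 \<in> U" using U_group unfolding addsubgroup_def by blast
lemma Uadd: "x \<in> U \<Longrightarrow> y \<in> U \<Longrightarrow> x + y \<in> U" using U_group unfolding addsubgroup_def by blast
lemma Uneg: "x \<in> U \<Longrightarrow> -x \<in> U" using U_group unfolding addsubgroup_def by blast

lemma G_U: "G \<subseteq> U" using T(1) Gam_U by blast

lemma lw_zero: "lw 0 = hzero"
proof (rule ext)
  fix g
  have "lw 0 = hadd (lw 0) (lw 0)" using lw_add[OF U0 U0] by simp
  then have "lw 0 g = lw 0 g + lw 0 g" unfolding hadd_def by metis
  then show "lw 0 g = hzero g" unfolding hzero_def by (metis add_cancel_left_right)
qed

lemma lw_neg: assumes x: "x \<in> U" shows "lw (-x) = hneg (lw x)"
proof -
  have "hadd (lw x) (lw (-x)) = hzero" using lw_add[OF x Uneg[OF x]] lw_zero by simp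
  show ?thesis
  proof (rule ext)
    fix g
    from fun_cong[OF \<open>hadd (lw x) (lw (-x)) = hzero\<close>, of g]
    have "lw x g + lw (-x) g = 0" by (simp add: hadd_def hzero_def)
    then show "lw (-x) g = hneg (lw x) g" unfolding hneg_def by (metis neg_eq_iff_add_eq_0)
  qed
qed

lemma lw_hahn: "x \<in> Gam (Suc n) \<Longrightarrow> lw x \<in> hahn (pos (Gam n))"
  by (rule bij_betw_apply[OF T(5)])

lemma lw_aw: assumes "x \<in> U" shows "anti_wo (supp (lw x))"
proof -
  obtain n where "x \<in> Gam n" using assms unfolding U_def by blast
  then have "x \<in> Gam (Suc n)" using T(2) by blast
  then show ?thesis using lw_hahn unfolding hahn_def by blast
qed

lemma lw_surj: assumes "f \<in> hahn (pos (Gam n))" shows "\<exists>x\<in>Gam (Suc n). lw x = f"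
proof -
  have "lw ` Gam (Suc n) = hahn (pos (Gam n))" by (rule bij_betw_imp_surj_on[OF T(5)])
  then show ?thesis using assms by (metis imageE)
qed

lemma l_hahn: assumes "g \<in> G" shows "l g \<in> hahn (pos G)"
proof -
  have "g \<in> Gam (Suc 0)" using assms T(1) T(2)[of 0] by blast
  then show ?thesis using lw_hahn[of g 0] T(1) T(4) assms by simp
qed

lemma Exp_set_U: "Exp_set Gam lw S = {x \<in> U. lw x \<in> hahn S}"
  by (simp add: Exp_set_def U_def)

lemma Exp_group: "addsubgroup (Exp_set Gam lw S)"
  unfolding addsubgroup_def Exp_set_U
  using U0 lw_zero hahn_zero Uadd lw_add hahn_hadd Uneg lw_neg hahn_hneg by auto

lemma Exp_sub: assumes "S \<subseteq> pos (Gam n)" shows "Exp_set Gam lw S \<subseteq> Gam (Suc n)"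
proof
  fix x assume "x \<in> Exp_set Gam lw S"
  then have x: "x \<in> U" "lw x \<in> hahn (pos (Gam n))" using hahn_mono[OF assms] unfolding Exp_set_U by auto
  then obtain y where "y \<in> Gam (Suc n)" "lw y = lw x" using lw_surj by blast
  then show "x \<in> Gam (Suc n)" using lw_inj x Gam_U by (metis subsetD)
qed

lemma psi_facts: "\<And>g. g\<in>G \<Longrightarrow> psi g \<in> G" "\<And>g h. g\<in>G \<Longrightarrow> h\<in>G \<Longrightarrow> psi (g+h) = psi g + psi h"
  "\<And> g h. g\<in>G \<Longrightarrow> h\<in>G \<Longrightarrow> g<h \<Longrightarrow> psi g < psi h"
  "\<And>g. g\<in>G \<Longrightarrow> l (psi g) = hmap psi G (l g)"
  using mor unfolding morphism_def by auto

lemma G_group: "addsubgroup G" using T(1) T(3)[of 0] by simp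
lemma G0: "0 \<in> G" using G_group unfolding addsubgroup_def by blast

lemma psi_0: "psi 0 = 0"
  using psi_facts(2)[OF G0 G0] by simp

lemma psi_less_iff: "g\<in>G \<Longrightarrow> h\<in>G \<Longrightarrow> psi g < psi h \<longleftrightarrow> g < h"
  by (metis psi_facts(3) not_less_iff_gr_or_eq order_less_asym)

lemma psi_inj: "inj_on psi G"
  unfolding inj_on_def by (metis psi_facts(3) not_less_iff_gr_or_eq order_less_irrefl)

lemma hmap_at: "g \<in> G \<Longrightarrow> hmap psi G a (psi g) = a g"
  unfolding hmap_def using psi_inj by (simp add: inv_into_f_f)

lemma hmap_out: "y \<notin> psi ` G \<Longrightarrow> hmap psi G a y = 0"
  unfolding hmap_def by simp

lemma hmap_hadd: "hmap psi G (hadd a b) = hadd (hmap psi G a) (hmap psi G b)"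
  by (rule ext) (simp add: hmap_def hadd_def)

lemma hmap_hneg: "hmap psi G (hneg a) = hneg (hmap psi G a)"
  by (rule ext) (simp add: hmap_def hneg_def)

lemma hmap_hpos:
  assumes "supp a \<subseteq> G" "anti_wo (supp a)" "hpos a"
  shows "hpos (hmap psi G a)"
proof -
  have nz: "a \<noteq> hzero" using assms(3) unfolding hpos_def by simp
  define v where "v = hval a"
  have v: "v \<in> supp a" "\<forall>w\<in>supp a. w \<le> v" using hval_max[OF assms(2) nz] v_def by auto
  have vG: "v \<in> G" using v assms(1) by blast
  have av: "0 < a v" using assms(3) unfolding hpos_def v_def by simp
  have 1: "hmap psi G a (psi v) \<noteq> 0" using hmap_at[OF vG, of a] av by simp
  have 2: "\<forall>w. psi v < w \<longrightarrow> hmap psi G a w = 0"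
  proof (intro allI impI)
    fix w assume w: "psi v < w"
    show "hmap psi G a w = 0"
    proof (cases "w \<in> psi ` G")
      case True
      then obtain g where g: "g \<in> G" "w = psi g" by blast
      have "a g = 0"
      proof (rule ccontr)
        assume "a g \<noteq> 0" then have "g \<le> v" using v unfolding supp_def by auto
        then have "\<not> psi v < psi g" using psi_less_iff g vG by auto
        then show False using w g by simp
      qed
      then show ?thesis using hmap_at[OF g(1), of a] g(2) by simp
    next
      case False then show ?thesis by (rule hmap_out)
    qed
  qed
  show ?thesis using hpos_at[OF 1 2] hmap_at[OF vG, of a] av by simp
qed

lemma growth_image:
  assumes gK: "growth_axiom lw G K" shows "growth_axiom lw G (psi ` K)"
proof -
  have KG: "K \<subseteq> G" and Kg: "addsubgroup K" and K0: "K \<noteq> {0}"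
    and Kax: "\<And>h f. h\<in>K \<Longrightarrow> f \<in> hahn (pos K) \<Longrightarrow> f \<noteq> hzero \<Longrightarrow> hless (lw h) (habs f)"
    using gK unfolding growth_axiom_def by auto
  have "psi ` K \<subseteq> G" using KG psi_facts(1) by blast
  moreover have "addsubgroup (psi ` K)"
    unfolding addsubgroup_def
  proof (intro conjI ballI)
    show "0 \<in> psi ` K" using psi_0 Kg unfolding addsubgroup_def by force
  next
    fix x y assume "x \<in> psi ` K" "y \<in> psi ` K"
    then obtain a b where "a \<in> K" "b \<in> K" "x = psi a" "y = psi b" by blast
    then show "x + y \<in> psi ` K" using psi_facts(2) KG Kg unfolding addsubgroup_def
      by (metis image_eqI subsetD)
  next
    fix x assume "x \<in> psi ` K"
    then obtain a where a: "a \<in> K" "x = psi a" by blast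
    then have "-a \<in> K" using Kg unfolding addsubgroup_def by blast
    moreover have "psi (-a) = - psi a"
      using psi_facts(2)[of a "-a"] a KG \<open>-a \<in> K\<close> psi_0
      by (metis add.right_inverse minus_unique subsetD)
    ultimately show "-x \<in> psi ` K" using a by force
  qed
  moreover have "psi ` K \<noteq> {0}"
  proof -
    have "0 \<in> K" using Kg unfolding addsubgroup_def by blast
    then obtain k where k: "k \<in> K" "k \<noteq> 0" using K0 by blast
    then have "psi k \<noteq> psi 0" using psi_inj KG G0 unfolding inj_on_def by blast
    then show ?thesis using k psi_0 by auto
  qed
  moreover have "\<forall>h\<in>psi`K. \<forall>f\<in>hahn (pos (psi ` K)). f \<noteq> hzero \<longrightarrow> hless (lw h) (habs f)"
  proof (intro ballI impI)
    fix h and f :: "'u \<Rightarrow> 'k" assume h: "h \<in> psi ` K" and f: "f \<in> hahn (pos (psi`K))" and fnz: "f \<noteq> hzero"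
    obtain k where k: "k \<in> K" "h = psi k" using h by blast
    define f0 :: "'u \<Rightarrow> 'k" where "f0 = (\<lambda>y. if y \<in> K then f (psi y) else 0)"
    have suppf: "supp f \<subseteq> pos (psi ` K)" "anti_wo (supp f)" using f unfolding hahn_def by auto
    have s0: "supp f0 \<subseteq> pos K"
    proof
      fix y assume "y \<in> supp f0"
      then have y: "y\<in>K" "f (psi y) \<noteq> 0" unfolding supp_def f0_def by (auto split: if_splits)
      then have "psi y \<in> pos (psi`K)" using suppf unfolding supp_def by auto
      then have "0 < psi y" unfolding pos_def above_def by auto
      then have "0 < y" using psi_less_iff[of 0 y] psi_0 y KG G0 by auto
      then show "y \<in> pos K" using y unfolding pos_def above_def by auto
    qed
    have KG': "pos K \<subseteq> G" using KG unfolding pos_def above_def by auto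
    have a0: "anti_wo (supp f0)"
      unfolding anti_wo_def
    proof (intro allI impI)
      fix B assume B: "B \<subseteq> supp f0" "B \<noteq> {}"
      have "psi ` B \<subseteq> supp f" using B(1) unfolding f0_def supp_def by (auto split: if_splits)
      moreover have "psi ` B \<noteq> {}" using B(2) by blast
      ultimately obtain x where x: "x \<in> psi ` B" "\<forall>c\<in>psi ` B. c \<le> x"
        using suppf(2) unfolding anti_wo_def by metis
      then obtain b where b: "b \<in> B" "x = psi b" by blast
      have BG: "B \<subseteq> G" using B(1) s0 KG' by blast
      show "\<exists>b\<in>B. \<forall>c\<in>B. c \<le> b"
      proof (intro bexI[OF _ b(1)] ballI)
        fix c assume c: "c \<in> B"
        have "psi c \<le> psi b" using x(2) b c by (metis image_eqI)
        then show "c \<le> b" using psi_less_iff[of b c] BG b c by (meson not_le subsetD)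
      qed
    qed
    have f0h: "f0 \<in> hahn (pos K)" using s0 a0 unfolding hahn_def by auto
    have fmap: "f = hmap psi G f0"
    proof (rule ext)
      fix y show "f y = hmap psi G f0 y"
      proof (cases "y \<in> psi ` G")
        case True then obtain g where g: "g \<in> G" "y = psi g" by blast
        then have hm: "hmap psi G f0 y = f0 g" using hmap_at by simp
        show ?thesis
        proof (cases "g \<in> K")
          case True then show ?thesis using hm g unfolding f0_def by simp
        next
          case False
          have "f y = 0"
          proof (rule ccontr)
            assume "f y \<noteq> 0" then have "y \<in> psi ` K" using suppf unfolding supp_def pos_def above_def by auto
            then obtain k' where "k' \<in> K" "y = psi k'" by blast
            then have "g = k'" using psi_inj g KG unfolding inj_on_def by blast
            then show False using False \<open>k' \<in> K\<close> by simp
          qed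
          then show ?thesis using hm False unfolding f0_def by simp
        qed
      next
        case False
        have "f y = 0"
        proof (rule ccontr)
          assume "f y \<noteq> 0" then have "y \<in> psi ` K" using suppf unfolding supp_def pos_def above_def by auto
          then show False using False KG by blast
        qed
        then show ?thesis using hmap_out[OF False] by simp
      qed
    qed
    have f0nz: "f0 \<noteq> hzero"
    proof
      assume "f0 = hzero" then have "f = hmap psi G hzero" using fmap by simp
      also have "\<dots> = hzero" by (rule ext) (simp add: hmap_def hzero_def)
      finally show False using fnz by simp
    qed
    have ax: "hless (lw k) (habs f0)" using Kax k(1) f0h f0nz by blast
    have kG: "k \<in> G" using k KG by auto
    have lwk: "lw k = l k" "lw h = hmap psi G (l k)" using T(4) kG psi_facts k by auto
    define d where "d = hadd (habs f0) (hneg (l k))"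
    have dpos: "hpos d" using ax lwk unfolding hless_def d_def by simp
    have suppf0G: "supp f0 \<subseteq> G" using s0 KG' by blast
    have lk: "l k \<in> hahn (pos G)" using l_hahn kG .
    have sa: "supp (habs f0) = supp f0" unfolding habs_def by (simp add: supp_hneg)
    have "supp d \<subseteq> supp f0 \<union> supp (l k)" using supp_hadd sa supp_hneg unfolding d_def by metis
    moreover have "supp (l k) \<subseteq> G" "anti_wo (supp (l k))" using lk unfolding hahn_def pos_def above_def by auto
    ultimately have "supp d \<subseteq> G" "anti_wo (supp d)" using suppf0G a0 anti_wo_Un anti_wo_subset by blast+
    then have "hpos (hmap psi G d)" using hmap_hpos dpos by blast
    moreover have "hmap psi G (habs f0) = habs f"
    proof (cases "hpos f0")
      case True then have "hpos f" using hmap_hpos suppf0G a0 fmap by simp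
      then show ?thesis using True fmap unfolding habs_def by simp
    next
      case False
      then have "hpos (hneg f0)" using trich[OF a0 f0nz] by simp
      then have "hpos (hmap psi G (hneg f0))" using hmap_hpos suppf0G a0 supp_hneg by metis
      then have "hpos (hneg f)" using fmap hmap_hneg[of f0] by simp
      then have "\<not> hpos f" using hpos_not_both by blast
      then show ?thesis using False fmap hmap_hneg unfolding habs_def by simp
    qed
    ultimately show "hless (lw h) (habs f)" unfolding hless_def d_def hmap_hadd hmap_hneg lwk by simp
  qed
  ultimately show ?thesis unfolding growth_axiom_def by blast
qed

lemma growth_pow: "growth_axiom lw G ((psi ^^ m) ` H)"
proof (induction m)
  case 0 then show ?case using gr by simp
next
  case (Suc m)
  have "(psi ^^ Suc m) ` H = psi ` ((psi^^m) ` H)" by (simp add: image_image)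
  then show ?case using growth_image Suc by simp
qed

end


context P9
begin

lemma growth_small:
  assumes gK: "growth_axiom lw G K" and g: "g \<in> K" and w: "w \<in> supp (lw g)" and s: "s \<in> pos K"
  shows "w < s"
proof (rule ccontr)
  assume "\<not> w < s"
  then have sw: "s \<le> w" by simp
  have KG: "K \<subseteq> G" and Kg: "addsubgroup K"
    and Kax: "\<And>h f. h\<in>K \<Longrightarrow> f \<in> hahn (pos K) \<Longrightarrow> f \<noteq> hzero \<Longrightarrow> hless (lw h) (habs f)"
    using gK unfolding growth_axiom_def by auto
  have KU: "K \<subseteq> U" using KG G_U by blast
  have key: "False" if g': "g' \<in> K" "hval (lw g') = v" "v \<in> supp (lw g')"
      "\<forall>u\<in>supp (lw g'). u \<le> v" "0 < lw g' v" "s \<le> v" for g' v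
  proof -
    define c where "c = lw g'"
    define f :: "'u \<Rightarrow> 'k" where "f = (\<lambda>y. if y = s then c v / 2 else 0)"
    have fh: "f \<in> hahn (pos K)" unfolding f_def by (rule hahn_single[OF s])
    have cv: "0 < c v" using g' c_def by simp
    have fs: "f s \<noteq> 0" using cv unfolding f_def by simp
    have "hpos f" using hpos_at[of f s] fs cv unfolding f_def by auto
    then have fnz: "f \<noteq> hzero" and habsf: "habs f = f" unfolding hpos_def habs_def by auto
    have "hless c f" using Kax[OF g'(1) fh fnz] habsf c_def by simp
    then have hp: "hpos (hadd f (hneg c))" unfolding hless_def .
    have d1: "hadd f (hneg c) v < 0" using cv unfolding hadd_def hneg_def f_def by auto
    have d2: "\<forall>w. v < w \<longrightarrow> hadd f (hneg c) w = 0"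
    proof (intro allI impI)
      fix w assume vw: "v < w"
      then have "w \<noteq> s" using g'(6) by auto
      moreover have "c w = 0" using g'(4) vw c_def unfolding supp_def by force
      ultimately show "hadd f (hneg c) w = 0" unfolding hadd_def hneg_def f_def by simp
    qed
    have "hpos (hadd f (hneg c)) \<longleftrightarrow> 0 < hadd f (hneg c) v"
      by (rule hpos_at) (use d1 d2 in auto)
    then show False using hp d1 by simp
  qed
  have gU: "g \<in> U" using g KU by blast
  have nz: "lw g \<noteq> hzero" using w unfolding supp_def hzero_def by auto
  define v where "v = hval (lw g)"
  have v: "v \<in> supp (lw g)" "\<forall>u\<in>supp (lw g). u \<le> v" using hval_max[OF lw_aw[OF gU] nz] v_def by auto
  have sv: "s \<le> v" using sw v w by (meson order_trans)
  have lv: "lw g v \<noteq> 0" using v unfolding supp_def by simp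
  show False
  proof (cases "0 < lw g v")
    case True then show False using key[OF g v_def[symmetric] v True sv] by simp
  next
    case False
    have mg: "-g \<in> K" using g Kg unfolding addsubgroup_def by blast
    have ln: "lw (-g) = hneg (lw g)" using lw_neg gU .
    have "hval (lw (-g)) = v" using ln hval_hneg v_def by simp
    moreover have "v \<in> supp (lw (-g))" "\<forall>u\<in>supp (lw (-g)). u \<le> v" using v ln supp_hneg[of "lw g"] by auto
    moreover have "0 < lw (-g) v" using ln False lv unfolding hneg_def by auto
    ultimately show False using key[OF mg] sv by blast
  qed
qed

abbreviation "AA m n \<equiv> LEg Gam lw psi H m (Suc n)"
abbreviation "SS m n \<equiv> above (AA m n) (LEg Gam lw psi H m n)"
abbreviation "BB m n \<equiv> Exp_set Gam lw (SS m n)"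

lemma AA_Suc: "AA m (Suc n) = gprod (AA m n) (BB m n)" by simp

lemma zero_AA: "0 \<in> AA m n"
proof (induction n)
  case 0 then show ?case using growth_pow[of m] unfolding growth_axiom_def addsubgroup_def by simp
next
  case (Suc n)
  have "0 \<in> BB m n" using Exp_group unfolding addsubgroup_def by blast
  then show ?case using Suc unfolding AA_Suc gprod_def by force
qed

lemma zero_LEg: "0 \<in> LEg Gam lw psi H m k"
proof (cases k)
  case 0 then show ?thesis by simp
next
  case (Suc j) then show ?thesis using zero_AA[of m j] by (simp only:)
qed

lemma SS_pos: "SS m n \<subseteq> pos (AA m n)"
  unfolding pos_def above_def using zero_LEg by auto

lemma AA_group: "addsubgroup (AA m n) \<and> AA m n \<subseteq> Gam n"
proof (induction n)
  case 0 then show ?case using growth_pow[of m] T(1) unfolding growth_axiom_def by simp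
next
  case (Suc n)
  have g: "addsubgroup (AA m (Suc n))" unfolding AA_Suc using Suc gprod_group Exp_group by blast
  have "SS m n \<subseteq> pos (Gam n)" using SS_pos Suc unfolding pos_def above_def by blast
  then have B: "BB m n \<subseteq> Gam (Suc n)" by (rule Exp_sub)
  have A: "AA m n \<subseteq> Gam (Suc n)" using Suc T(2) by blast
  have "AA m (Suc n) \<subseteq> Gam (Suc n)"
    unfolding AA_Suc gprod_def using A B T(3)[of "Suc n"] unfolding addsubgroup_def by blast
  then show ?case using g by blast
qed

lemma AA_U: "AA m n \<subseteq> U" using AA_group Gam_U by blast
lemma BB_U: "BB m n \<subseteq> U" by (auto simp: Exp_set_U)

lemma AA_add: "x \<in> AA m n \<Longrightarrow> y \<in> AA m n \<Longrightarrow> x + y \<in> AA m n"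
  using AA_group unfolding addsubgroup_def by blast
lemma AA_neg: "x \<in> AA m n \<Longrightarrow> -x \<in> AA m n"
  using AA_group unfolding addsubgroup_def by blast
lemma BB_neg: "x \<in> BB m n \<Longrightarrow> -x \<in> BB m n"
  using Exp_group unfolding addsubgroup_def by blast

definition "Small m n \<longleftrightarrow> (\<forall>g\<in>AA m n. \<forall>w\<in>supp (lw g). \<forall>s\<in>SS m n. w < s)"

lemma lw_pos: assumes "x \<in> U" "0 < x" shows "hpos (lw x)"
proof -
  have "hless (lw 0) (lw x)" using lw_mono[OF U0 assms(1) assms(2)] .
  moreover have "hadd (lw x) (hneg (lw 0)) = lw x" unfolding lw_zero
    by (rule ext) (simp add: hadd_def hneg_def hzero_def)
  ultimately show ?thesis unfolding hless_def by simp
qed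

lemma dom: assumes sm: "Small m n" and e: "e \<in> BB m n" "0 < e" and g: "g \<in> AA m n"
  shows "g < e"
proof -
  have eU: "e \<in> U" and le: "lw e \<in> hahn (SS m n)" using e unfolding Exp_set_U by auto
  have gU: "g \<in> U" using g AA_U by blast
  have hp: "hpos (lw e)" using lw_pos eU e(2) .
  then have nz: "lw e \<noteq> hzero" unfolding hpos_def by simp
  define v where "v = hval (lw e)"
  have v: "v \<in> supp (lw e)" "\<forall>u\<in>supp (lw e). u \<le> v" using hval_max[OF lw_aw[OF eU] nz] v_def by auto
  have vS: "v \<in> SS m n" using v le unfolding hahn_def by blast
  have small: "\<And>w. w \<in> supp (lw g) \<Longrightarrow> w < v" using sm g vS unfolding Small_def by blast
  have ev: "0 < lw e v" using hp unfolding hpos_def v_def by simp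
  have gv: "lw g v = 0" using small[of v] unfolding supp_def by auto
  have d1: "hadd (lw e) (hneg (lw g)) v \<noteq> 0" using ev gv unfolding hadd_def hneg_def by simp
  have d2: "\<forall>w. v < w \<longrightarrow> hadd (lw e) (hneg (lw g)) w = 0"
  proof (intro allI impI)
    fix w assume vw: "v < w"
    have "lw e w = 0" using v(2) vw unfolding supp_def by force
    moreover have "lw g w = 0" using small[of w] vw unfolding supp_def by force
    ultimately show "hadd (lw e) (hneg (lw g)) w = 0" unfolding hadd_def hneg_def by simp
  qed
  have "hpos (hadd (lw e) (hneg (lw g)))" using hpos_at[OF d1 d2] ev gv
    unfolding hadd_def hneg_def by simp
  then have "hless (lw g) (lw e)" unfolding hless_def .
  then show ?thesis using lw_less_iff gU eU by blast
qed

lemma dom': assumes sm: "Small m n" and e: "e \<in> BB m n" "e < 0" and g: "g \<in> AA m n"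
  shows "e < g"
proof -
  have "-g < -e" using dom[OF sm BB_neg[OF e(1)] _ AA_neg[OF g]] e(2) by simp
  then show ?thesis by simp
qed

lemma small_ne: "Small m n \<and> SS m n \<noteq> {}"
proof (induction n)
  case 0
  have gK: "growth_axiom lw G (AA m 0)" using growth_pow[of m] by simp
  have "Small m 0" unfolding Small_def
  proof (intro ballI)
    fix g w s assume "g \<in> AA m 0" "w \<in> supp (lw g)" "s \<in> SS m 0"
    then show "w < s" using growth_small[OF gK] unfolding pos_def by simp
  qed
  moreover have "SS m 0 \<noteq> {}"
  proof -
    have K0: "AA m 0 \<noteq> {0}" using gK unfolding growth_axiom_def by blast
    then obtain k where k: "k \<in> AA m 0" "k \<noteq> 0" using zero_AA[of m 0] by blast
    show ?thesis
    proof (cases "0 < k")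
      case True then have "k \<in> SS m 0" using k by (simp add: above_def)
      then show ?thesis by blast
    next
      case False then have "k < 0" using k(2) by (metis not_less_iff_gr_or_eq)
      then have "0 < -k" by simp
      then have "-k \<in> SS m 0" using AA_neg[OF k(1)] by (simp add: above_def)
      then show ?thesis by blast
    qed
  qed
  ultimately show ?case by blast
next
  case (Suc n)
  then have sm: "Small m n" and ne: "SS m n \<noteq> {}" by auto
  obtain s' where s': "s' \<in> SS m n" using ne by blast
  have s'p: "s' \<in> pos (AA m n)" using s' SS_pos by blast
  have "Small m (Suc n)" unfolding Small_def
  proof (intro ballI)
    fix g w s assume g: "g \<in> AA m (Suc n)" and w: "w \<in> supp (lw g)" and s: "s \<in> SS m (Suc n)"
    obtain g' e' where ge: "g = g' + e'" "g' \<in> AA m n" "e' \<in> BB m n" using g unfolding AA_Suc gprod_def by blast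
    have U': "g' \<in> U" "e' \<in> U" using ge AA_U BB_U by blast+
    have "lw g = hadd (lw g') (lw e')" using lw_add[OF U'] ge by simp
    then have wc: "w \<in> supp (lw g') \<or> w \<in> supp (lw e')" using supp_hadd[of "lw g'" "lw e'"] w by auto
    have sab: "\<And>a. a \<in> AA m n \<Longrightarrow> a < s" using s unfolding above_def by auto
    have se: "supp (lw e') \<subseteq> AA m n" using ge(3) unfolding Exp_set_U hahn_def above_def by blast
    have sg: "\<And>w. w \<in> supp (lw g') \<Longrightarrow> w < s'" using sm ge(2) s' unfolding Small_def by blast
    have ss: "s' < s" using sab s' unfolding above_def by blast
    show "w < s"
    proof (cases "w \<in> supp (lw e')")
      case True then show ?thesis using se sab by blast
    next
      case False then have "w < s'" using wc sg by blast
      then show ?thesis using ss by (rule order.strict_trans)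
    qed
  qed
  moreover have "SS m (Suc n) \<noteq> {}"
  proof -
    have s'G: "s' \<in> pos (Gam n)" using s'p AA_group unfolding pos_def above_def by blast
    define dl :: "'u \<Rightarrow> 'k" where "dl = (\<lambda>y. if y = s' then 1 else 0)"
    have "dl \<in> hahn (pos (Gam n))" unfolding dl_def by (rule hahn_single[OF s'G])
    then obtain x where x: "x \<in> Gam (Suc n)" "lw x = dl" using lw_surj by blast
    have xU: "x \<in> U" using x Gam_U by blast
    have "dl \<in> hahn (SS m n)" unfolding dl_def by (rule hahn_single[OF s'])
    then have xB: "x \<in> BB m n" using xU x unfolding Exp_set_U by simp
    have "hpos dl" using hpos_at[of dl s'] unfolding dl_def by simp
    moreover have "hadd dl (hneg hzero) = dl" by (rule ext) (simp add: hadd_def hneg_def hzero_def)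
    ultimately have "hless (lw 0) (lw x)" unfolding hless_def lw_zero x(2) by simp
    then have x0: "0 < x" using lw_less_iff U0 xU by blast
    have "\<forall>a\<in>AA m n. a < x" using dom[OF sm xB x0] by blast
    moreover have "x \<in> AA m (Suc n)" unfolding AA_Suc gprod_def using xB zero_AA[of m n] by force
    ultimately have "x \<in> SS m (Suc n)" by (simp add: above_def)
    then show ?thesis by blast
  qed
  ultimately show ?case by blast
qed

lemma convex: assumes "x \<in> AA m n" "y \<in> AA m n" "z \<in> AA m (Suc n)" "x \<le> z" "z \<le> y"
  shows "z \<in> AA m n"
proof -
  have sm: "Small m n" using small_ne by blast
  obtain a e where ae: "z = a + e" "a \<in> AA m n" "e \<in> BB m n" using assms(3) unfolding AA_Suc gprod_def by blast
  consider "e = 0" | "0 < e" | "e < 0" by fastforce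
  then show ?thesis
  proof cases
    case 1 then show ?thesis using ae by simp
  next
    case 2
    have "y + - a < e" using dom[OF sm ae(3) 2 AA_add[OF assms(2) AA_neg[OF ae(2)]]] .
    then have "y + - a + a < e + a" by (rule add_strict_right_mono)
    then have "y < z" using ae(1) by (simp add: add.commute)
    then show ?thesis using assms(5) by (meson not_le)
  next
    case 3
    have "e < x + - a" using dom'[OF sm ae(3) 3 AA_add[OF assms(1) AA_neg[OF ae(2)]]] .
    then have "e + a < x + - a + a" by (rule add_strict_right_mono)
    then have "z < x" using ae(1) by (simp add: add.commute)
    then show ?thesis using assms(4) by (meson not_le)
  qed
qed

lemma antilex: "antilex_prod (AA m n) (BB m n) (LEg Gam lw psi H m (Suc (Suc n)))"
proof -
  have sm: "Small m n" using small_ne by blast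
  have z1: "0 \<in> AA m n" by (rule zero_AA)
  have z2: "0 \<in> BB m n" using Exp_group unfolding addsubgroup_def by blast
  have I: "AA m n \<inter> BB m n = {0}"
  proof
    show "{0} \<subseteq> AA m n \<inter> BB m n" using z1 z2 by simp
  next
    show "AA m n \<inter> BB m n \<subseteq> {0}"
    proof
      fix x assume x: "x \<in> AA m n \<inter> BB m n"
      then have xa: "x \<in> AA m n" and xb: "x \<in> BB m n" by auto
      have "\<not> 0 < x"
      proof
        assume "0 < x" then have "x < x" by (rule dom[OF sm xb _ xa])
        then show False by simp
      qed
      moreover have "\<not> x < 0"
      proof
        assume "x < 0" then have "x < x" by (rule dom'[OF sm xb _ xa])
        then show False by simp
      qed
      ultimately show "x \<in> {0}" by (simp add: not_less_iff_gr_or_eq)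
    qed
  qed
  have C: "\<forall>x\<in>AA m n. \<forall>y\<in>AA m n. \<forall>z\<in>AA m (Suc n). x \<le> z \<and> z \<le> y \<longrightarrow> z \<in> AA m n"
  proof (intro ballI impI)
    fix x y z assume "x \<in> AA m n" "y \<in> AA m n" "z \<in> AA m (Suc n)" "x \<le> z \<and> z \<le> y"
    then show "z \<in> AA m n" using convex[of x m n y z] by blast
  qed
  have g1: "addsubgroup (AA m n)" using AA_group by blast
  have g2: "addsubgroup (BB m n)" by (rule Exp_group)
  have E: "LEg Gam lw psi H m (Suc (Suc n)) = gprod (AA m n) (BB m n)" by (rule AA_Suc)
  show ?thesis unfolding antilex_prod_def
    using g1 g2 I C E by blast
qed

lemma part3: "Exp_set Gam lw (pos (AA m n)) \<subseteq> AA m (Suc n)"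
proof (induction n)
  case 0
  have "pos (AA m 0) = SS m 0" by (simp add: pos_def)
  moreover have "BB m 0 \<subseteq> AA m (Suc 0)" unfolding AA_Suc gprod_def using zero_AA[of m 0] by force
  ultimately show ?case by simp
next
  case (Suc n)
  show ?case
  proof
    fix x assume "x \<in> Exp_set Gam lw (pos (AA m (Suc n)))"
    then have xU: "x \<in> U" and fx: "lw x \<in> hahn (pos (AA m (Suc n)))" unfolding Exp_set_U by auto
    define f where "f = lw x"
    define f1 :: "'u \<Rightarrow> 'k" where "f1 = (\<lambda>w. if w \<in> SS m (Suc n) then f w else 0)"
    define f2 :: "'u \<Rightarrow> 'k" where "f2 = (\<lambda>w. if w \<in> SS m (Suc n) then 0 else f w)"
    have sf: "supp f \<subseteq> pos (AA m (Suc n))" "anti_wo (supp f)" using fx f_def unfolding hahn_def by auto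
    have s1: "supp f1 \<subseteq> supp f \<inter> SS m (Suc n)" unfolding f1_def supp_def by auto
    have s2: "supp f2 \<subseteq> supp f - SS m (Suc n)" unfolding f2_def supp_def by auto
    have s2p: "supp f2 \<subseteq> pos (AA m n)"
    proof
      fix t assume "t \<in> supp f2"
      then have t: "t \<in> AA m (Suc n)" "0 < t" "t \<notin> SS m (Suc n)" using s2 sf(1) unfolding pos_def above_def by auto
      then obtain g where g: "g \<in> AA m n" "\<not> g < t" unfolding above_def by auto
      have "t \<in> AA m n" using convex[OF zero_AA g(1) t(1)] t(2) g(2) by simp
      then show "t \<in> pos (AA m n)" using t(2) unfolding pos_def above_def by simp
    qed
    have AG: "AA m (Suc n) \<subseteq> Gam (Suc n)" using AA_group by blast
    have pG: "pos (AA m (Suc n)) \<subseteq> pos (Gam (Suc n))" using AG unfolding pos_def above_def by blast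
    have sub1: "supp f1 \<subseteq> supp f" "supp f2 \<subseteq> supp f" using s1 s2 by blast+
    have aw1: "anti_wo (supp f1)" by (rule anti_wo_subset[OF sf(2) sub1(1)])
    have aw2: "anti_wo (supp f2)" by (rule anti_wo_subset[OF sf(2) sub1(2)])
    have "supp f1 \<subseteq> pos (Gam (Suc n))" using sub1(1) sf(1) pG by blast
    then have h1: "f1 \<in> hahn (pos (Gam (Suc n)))" using aw1 unfolding hahn_def by blast
    have "supp f2 \<subseteq> pos (Gam (Suc n))" using sub1(2) sf(1) pG by blast
    then have h2: "f2 \<in> hahn (pos (Gam (Suc n)))" using aw2 unfolding hahn_def by blast
    obtain x1 where x1: "x1 \<in> Gam (Suc (Suc n))" "lw x1 = f1" using lw_surj[OF h1] by blast
    obtain x2 where x2: "x2 \<in> Gam (Suc (Suc n))" "lw x2 = f2" using lw_surj[OF h2] by blast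
    have U12: "x1 \<in> U" "x2 \<in> U" using x1 x2 Gam_U by blast+
    have "f2 \<in> hahn (pos (AA m n))" using s2p aw2 unfolding hahn_def by blast
    then have "x2 \<in> Exp_set Gam lw (pos (AA m n))" using U12 x2 unfolding Exp_set_U by simp
    then have x2A: "x2 \<in> AA m (Suc n)" using Suc by blast
    have "supp f1 \<subseteq> SS m (Suc n)" using s1 by blast
    then have "f1 \<in> hahn (SS m (Suc n))" using aw1 unfolding hahn_def by blast
    then have x1B: "x1 \<in> BB m (Suc n)" using U12 x1 unfolding Exp_set_U by simp
    have "x2 + x1 \<in> AA m (Suc (Suc n))" unfolding AA_Suc[of m "Suc n"] gprod_def using x1B x2A by blast
    moreover have "lw (x2 + x1) = lw x"
    proof -
      have "lw (x2 + x1) = hadd f2 f1" using lw_add[OF U12(2) U12(1)] x1 x2 by simp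
      also have "\<dots> = f" unfolding f1_def f2_def hadd_def by (rule ext) simp
      finally show ?thesis using f_def by simp
    qed
    ultimately show "x \<in> AA m (Suc (Suc n))" using lw_inj[OF Uadd[OF U12(2) U12(1)] xU] by simp
  qed
qed

end
theorem proposition9:
  fixes klog :: "'k::linordered_field \<Rightarrow> 'k"
    and G :: "'u::linordered_ab_group_add set"
    and l :: "'u \<Rightarrow> 'u \<Rightarrow> 'k"
    and Gam :: "nat \<Rightarrow> 'u set"
    and lw :: "'u \<Rightarrow> 'u \<Rightarrow> 'k"
    and psi :: "'u \<Rightarrow> 'u"
    and H :: "'u set"
  assumes "surj_log klog"
    and "addsubgroup G"
    and "prelog_section G l"
    and "EL_tower G l Gam lw"
    and "morphism G l psi"
    and "growth_axiom lw G H"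
  shows "(\<forall>m. growth_axiom lw G (LEg Gam lw psi H m (Suc 0)))
       \<and> (\<forall>m n. antilex_prod (LEg Gam lw psi H m (Suc n))
                 (Exp_set Gam lw (above (LEg Gam lw psi H m (Suc n)) (LEg Gam lw psi H m n)))
                 (LEg Gam lw psi H m (Suc (Suc n))))
       \<and> (\<forall>m n. Exp_set Gam lw (pos (LEg Gam lw psi H m (Suc n)))
                 \<subseteq> LEg Gam lw psi H m (Suc (Suc n)))"
  proof -
  interpret P9 G l Gam lw psi H using assms(4,5,6) by unfold_locales
  show ?thesis using growth_pow antilex part3 by simp
qed

end
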